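(* Let $r\ge1$ and let $\ell\ge 2^r+1$ (with $\ell$ odd). There exists $m_0=m_0(r,\ell)$ such that for every $m\ge m_0$ the graph $H_{m,r}$ is $(C_\ell,r)$-Ramsey.
   Context: $H_{m,r}$ is the graph on pairwise disjoint vertex sets $V_1,\dots,V_{2^r+1}$, each of size $m$, whose edges are: a perfect matching between $V_{2i-1}$ and $V_{2i}$ for each $1\le i\le 2^{r-1}$, and all possible edges between $V_i$ and $V_j$ for every other pair $\{i,j\}$ of distinct indices (no edges inside any $V_i$). A graph $G$ is $(H,r)$-Ramsey if every colouring of its edges with $r$ colours contains a monochromatic copy of $H$. $C_\ell$ is the cycle of length $\ell$. *)

theory Defs
  imports Main
begin

text \<open>Vertices of H_{m,r}: pairs (i, a) with part index 1 <= i <= 2^r+1 and a < m,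
  so V_i = {(i,a) | a < m} has size m.\<close>
definition H_verts :: "nat \<Rightarrow> nat \<Rightarrow> (nat \<times> nat) set" where
  "H_verts m r = {1..2^r+1} \<times> {0..<m}"

definition matched_pair :: "nat \<Rightarrow> nat \<Rightarrow> nat \<Rightarrow> bool" where
  "matched_pair r i j \<longleftrightarrow>
     (\<exists>k. 1 \<le> k \<and> k \<le> 2^(r-1) \<and> ({i, j} = {2*k-1, 2*k}))"

text \<open>Adjacency of H_{m,r}: no edges inside a part; the perfect matching between
  V_{2k-1} and V_{2k} is (2k-1,a)--(2k,a); complete bipartite between all other pairs.\<close>
definition H_adj :: "nat \<Rightarrow> nat \<Rightarrow> nat \<times> nat \<Rightarrow> nat \<times> nat \<Rightarrow> bool" where
  "H_adj m r u v \<longleftrightarrow> u \<in> H_verts m r \<and> v \<in> H_verts m r \<and> fst u \<noteq> fst v \<and>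
     (matched_pair r (fst u) (fst v) \<longrightarrow> snd u = snd v)"

definition has_mono_cycle ::
  "'v set \<Rightarrow> ('v \<Rightarrow> 'v \<Rightarrow> bool) \<Rightarrow> ('v set \<Rightarrow> nat) \<Rightarrow> nat \<Rightarrow> bool" where
  "has_mono_cycle V E c l \<longleftrightarrow>
     (\<exists>f col. inj_on f {0..<l} \<and> f ` {0..<l} \<subseteq> V \<and>
        (\<forall>k<l. E (f k) (f ((k+1) mod l)) \<and> c {f k, f ((k+1) mod l)} = col))"

definition cycle_ramsey :: "'v set \<Rightarrow> ('v \<Rightarrow> 'v \<Rightarrow> bool) \<Rightarrow> nat \<Rightarrow> nat \<Rightarrow> bool" where
  "cycle_ramsey V E l r \<longleftrightarrow>
     (\<forall>c :: 'v set \<Rightarrow> nat. (\<forall>u v. E u v \<longrightarrow> c {u, v} < r) \<longrightarrow> has_mono_cycle V E c l)"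

end

theory Submission
  imports Defs "HOL-Library.Ramsey"
begin

definition walk :: "nat set \<Rightarrow> (nat set \<Rightarrow> nat) \<Rightarrow> nat \<Rightarrow> (nat \<Rightarrow> nat) \<Rightarrow> nat \<Rightarrow> bool" where
  "walk S \<kappa> c w k \<longleftrightarrow> (\<forall>i<k. w i \<in> S \<and> w (Suc i) \<in> S \<and> w i \<noteq> w (Suc i) \<and> \<kappa> {w i, w (Suc i)} = c)"

lemma walk_app:
  assumes "walk S \<kappa> c w1 k1" "walk S \<kappa> c w2 k2" "w1 k1 = w2 0"
  shows "walk S \<kappa> c (\<lambda>t. if t \<le> k1 then w1 t else w2 (t - k1)) (k1 + k2)"
  unfolding walk_def
proof (intro allI impI)
  fix i assume i: "i < k1 + k2"
  show "(if i \<le> k1 then w1 i else w2 (i - k1)) \<in> S \<and>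
        (if Suc i \<le> k1 then w1 (Suc i) else w2 (Suc i - k1)) \<in> S \<and>
        (if i \<le> k1 then w1 i else w2 (i - k1)) \<noteq> (if Suc i \<le> k1 then w1 (Suc i) else w2 (Suc i - k1)) \<and>
        \<kappa> {if i \<le> k1 then w1 i else w2 (i - k1), if Suc i \<le> k1 then w1 (Suc i) else w2 (Suc i - k1)} = c"
  proof (cases "i < k1")
    case True
    then show ?thesis using assms(1) unfolding walk_def by auto
  next
    case False
    then have i1: "i - k1 < k2" "Suc i - k1 = Suc (i - k1)" using i by auto
    have P: "w2 (i - k1) \<in> S \<and> w2 (Suc (i - k1)) \<in> S \<and> w2 (i - k1) \<noteq> w2 (Suc (i - k1)) \<and> \<kappa> {w2 (i - k1), w2 (Suc (i - k1))} = c"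
      using assms(2) i1 unfolding walk_def by blast
    show ?thesis
    proof (cases "i = k1")
      case True
      then show ?thesis using P assms(3) by simp
    next
      case False
      then have "\<not> i \<le> k1" "\<not> Suc i \<le> k1" using \<open>\<not> i < k1\<close> by auto
      then show ?thesis using P i1 by simp
    qed
  qed
qed

lemma walk_rev:
  assumes "walk S \<kappa> c w k"
  shows "walk S \<kappa> c (\<lambda>t. w (k - t)) k"
  unfolding walk_def
proof (intro allI impI)
  fix i assume i: "i < k"
  have "k - i = Suc (k - Suc i)" using i by auto
  moreover have "k - Suc i < k" using i by auto
  moreover have "w (k - Suc i) \<in> S \<and> w (Suc (k - Suc i)) \<in> S \<and> w (k - Suc i) \<noteq> w (Suc (k - Suc i)) \<and> \<kappa> {w (k - Suc i), w (Suc (k - Suc i))} = c"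
    using assms \<open>k - Suc i < k\<close> unfolding walk_def by blast
  ultimately show "w (k - i) \<in> S \<and> w (k - Suc i) \<in> S \<and> w (k - i) \<noteq> w (k - Suc i) \<and> \<kappa> {w (k - i), w (k - Suc i)} = c"
    by (simp add: insert_commute)
qed

lemma walk_shift:
  assumes "walk S \<kappa> c w k" "a + b \<le> k"
  shows "walk S \<kappa> c (\<lambda>t. w (a + t)) b"
  using assms unfolding walk_def
  by (metis add_Suc_right add_less_cancel_left less_le_trans)

lemma walk_mono:
  assumes "walk S \<kappa> c w k" "S \<subseteq> S'"
  shows "walk S' \<kappa> c w k"
  using assms unfolding walk_def by blast

lemma walk_edge:
  assumes "u \<in> S" "v \<in> S" "u \<noteq> v" "\<kappa> {u, v} = c"
  shows "walk S \<kappa> c (\<lambda>t. if t = 0 then u else v) 1"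
  using assms unfolding walk_def by auto

lemma walk_zero: "walk S \<kappa> c w 0"
  unfolding walk_def by auto

lemma closing:
  assumes w1: "walk S \<kappa> c w1 k1" and w2: "walk S \<kappa> c w2 k2"
    and "w1 0 = z" "w2 0 = z" "w1 k1 = u" "w2 k2 = v" "u \<in> S" "v \<in> S" "u \<noteq> v"
    "\<kappa> {u, v} = c" "even (k1 + k2)"
  shows "\<exists>w k. walk S \<kappa> c w k \<and> w k = w 0 \<and> odd k"
proof -
  define e where "e = (\<lambda>t::nat. if t = 0 then u else v)"
  have we: "walk S \<kappa> c e 1" unfolding e_def using assms walk_edge by blast
  define a where "a = (\<lambda>t. if t \<le> k1 then w1 t else e (t - k1))"
  have wa: "walk S \<kappa> c a (k1 + 1)" unfolding a_def
    by (rule walk_app[OF w1 we]) (simp add: e_def assms)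
  have a0: "a 0 = z" "a (k1 + 1) = v" using assms by (auto simp: a_def e_def)
  define b where "b = (\<lambda>t. if t \<le> k1 + 1 then a t else w2 (k2 - (t - (k1 + 1))))"
  have wb: "walk S \<kappa> c b (k1 + 1 + k2)" unfolding b_def
    by (rule walk_app[OF wa walk_rev[OF w2]]) (simp add: a_def e_def assms)
  have "b (k1 + 1 + k2) = z" using assms by (auto simp: b_def a_def e_def)
  moreover have "b 0 = z" using a0 by (simp add: b_def)
  moreover have "odd (k1 + 1 + k2)" using assms by simp
  ultimately show ?thesis using wb by metis
qed

lemma exists_odd_walk:
  assumes "finite S" "2^r < card S" "\<forall>x\<in>S. \<forall>y\<in>S. x \<noteq> y \<longrightarrow> \<kappa> {x, y} < r"
  shows "\<exists>c w k. walk S \<kappa> c w k \<and> w k = w 0 \<and> odd k"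
  using assms
proof (induction r arbitrary: S)
  case 0
  then obtain x y where "x \<in> S" "y \<in> S" "x \<noteq> y"
    by (metis One_nat_def card_le_Suc0_iff_eq not_le power_0)
  then show ?case using "0.prems"(3) by auto
next
  case (Suc r)
  show ?case
  proof (rule ccontr)
    assume nw: "\<not> ?case"
    define R where "R u v \<longleftrightarrow> (\<exists>w k. walk S \<kappa> r w k \<and> w 0 = u \<and> w k = v)" for u v
    define Od where "Od u v \<longleftrightarrow> (\<exists>w k. walk S \<kappa> r w k \<and> w 0 = u \<and> w k = v \<and> odd k)" for u v
    define rep where "rep v = Min {u\<in>S. R v u}" for v
    define \<sigma> where "\<sigma> v \<longleftrightarrow> Od (rep v) v" for v
    have Rrefl: "R u u" for u unfolding R_def using walk_zero by fastforce
    have Rsym: "R u v \<Longrightarrow> R v u" for u v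
      unfolding R_def using walk_rev by fastforce
    have Rtrans: "R u v \<Longrightarrow> R v z \<Longrightarrow> R u z" for u v z
    proof -
      assume "R u v" "R v z"
      then obtain w1 k1 w2 k2 where w: "walk S \<kappa> r w1 k1" "w1 0 = u" "w1 k1 = v"
        "walk S \<kappa> r w2 k2" "w2 0 = v" "w2 k2 = z" unfolding R_def by blast
      have "walk S \<kappa> r (\<lambda>t. if t \<le> k1 then w1 t else w2 (t - k1)) (k1 + k2)"
        using walk_app w by simp
      moreover have "(\<lambda>t. if t \<le> k1 then w1 t else w2 (t - k1)) 0 = u" using w by simp
      moreover have "(\<lambda>t. if t \<le> k1 then w1 t else w2 (t - k1)) (k1 + k2) = z"
        using w by (cases "k2 = 0") auto
      ultimately show "R u z" unfolding R_def by blast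
    qed
    have key: "\<sigma> u \<noteq> \<sigma> v" if uv: "u \<in> S" "v \<in> S" "u \<noteq> v" "\<kappa> {u, v} = r" for u v
    proof
      assume eq: "\<sigma> u = \<sigma> v"
      have "R u v" unfolding R_def using walk_edge[of u S v \<kappa> r, OF uv] by fastforce
      then have "R u x \<longleftrightarrow> R v x" for x using Rsym Rtrans by metis
      then have "{x\<in>S. R u x} = {x\<in>S. R v x}" by simp
      then have rr: "rep u = rep v" unfolding rep_def by simp
      define z where "z = rep u"
      have "u \<in> {x\<in>S. R u x}" using uv Rrefl by simp
      then have "z \<in> {x\<in>S. R u x}" unfolding z_def rep_def
        using Suc.prems(1) by (intro Min_in) auto
      then have "R u z" by simp
      then have zu: "R z u" by (rule Rsym)
      have zv: "R z v" by (rule Rtrans[OF zu \<open>R u v\<close>])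
      obtain w1 k1 where w1: "walk S \<kappa> r w1 k1" "w1 0 = z" "w1 k1 = u" using zu R_def by blast
      obtain w2 k2 where w2: "walk S \<kappa> r w2 k2" "w2 0 = z" "w2 k2 = v" using zv R_def by blast
      have p1: "\<sigma> u \<longleftrightarrow> Od z u" unfolding \<sigma>_def z_def by simp
      have p2: "\<sigma> v \<longleftrightarrow> Od z v" unfolding \<sigma>_def z_def rr by simp
      have "even (k1 + k2)"
      proof (cases "\<sigma> u")
        case True
        then have "Od z u" "Od z v" using p1 p2 eq by auto
        then obtain w1' k1' w2' k2' where
          "walk S \<kappa> r w1' k1'" "w1' 0 = z" "w1' k1' = u" "odd k1'"
          "walk S \<kappa> r w2' k2'" "w2' 0 = z" "w2' k2' = v" "odd k2'" unfolding Od_def by blast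
        then have "\<exists>w k. walk S \<kappa> r w k \<and> w k = w 0 \<and> odd k"
          using closing[of S \<kappa> r w1' k1' w2' k2' z u v] uv by simp
        then show ?thesis using nw by blast
      next
        case False
        then have "\<not> Od z u" "\<not> Od z v" using p1 p2 eq by auto
        then have "even k1" "even k2" using w1 w2 unfolding Od_def by blast+
        then show ?thesis by simp
      qed
      then have "\<exists>w k. walk S \<kappa> r w k \<and> w k = w 0 \<and> odd k"
        using closing[of S \<kappa> r w1 k1 w2 k2 z u v] uv w1 w2 by simp
      then show False using nw by blast
    qed
    define S0 where "S0 = {v\<in>S. \<sigma> v}"
    define S1 where "S1 = {v\<in>S. \<not> \<sigma> v}"
    have "card S0 + card S1 = card S"
      unfolding S0_def S1_def using Suc.prems(1)
      by (subst card_Un_disjoint[symmetric]) (auto intro: arg_cong[where f=card])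
    then have "2^r < card S0 \<or> 2^r < card S1" using Suc.prems(2) by (simp, linarith)
    then obtain T where T: "T \<subseteq> S" "2^r < card T" "\<forall>x\<in>T. \<forall>y\<in>T. \<sigma> x = \<sigma> y"
    proof
      assume "2^r < card S0" moreover have "S0 \<subseteq> S" "\<forall>x\<in>S0. \<forall>y\<in>S0. \<sigma> x = \<sigma> y" by (auto simp: S0_def)
      ultimately show ?thesis using that by blast
    next
      assume "2^r < card S1" moreover have "S1 \<subseteq> S" "\<forall>x\<in>S1. \<forall>y\<in>S1. \<sigma> x = \<sigma> y" by (auto simp: S1_def)
      ultimately show ?thesis using that by blast
    qed
    have "\<forall>x\<in>T. \<forall>y\<in>T. x \<noteq> y \<longrightarrow> \<kappa> {x, y} < r"
    proof (intro ballI impI)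
      fix x y assume "x \<in> T" "y \<in> T" "x \<noteq> y"
      then have "\<kappa> {x, y} < Suc r" "\<kappa> {x, y} \<noteq> r" using T Suc.prems(3) key by blast+
      then show "\<kappa> {x, y} < r" by simp
    qed
    then obtain c w k where "walk T \<kappa> c w k" "w k = w 0" "odd k"
      using Suc.IH[of T] T Suc.prems(1) finite_subset by blast
    then show False using nw walk_mono[OF _ T(1)] by blast
  qed
qed

lemma odd_walk_cycle:
  fixes k :: nat
  assumes "walk S \<kappa> c w k" "w k = w 0" "odd k"
  shows "\<exists>x (k'::nat). odd k' \<and> inj_on x {..<k'} \<and> x ` {..<k'} \<subseteq> S \<and>
     (\<forall>i<k'. x i \<noteq> x ((i+1) mod k') \<and> \<kappa> {x i, x ((i+1) mod k')} = c)"
  using assms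
proof (induction k arbitrary: w rule: less_induct)
  case (less k)
  show ?case
  proof (cases "inj_on w {..<k}")
    case True
    have "w i \<noteq> w ((i+1) mod k) \<and> \<kappa> {w i, w ((i+1) mod k)} = c" if "i < k" for i
    proof (cases "Suc i < k")
      case True
      then show ?thesis using less.prems(1) that unfolding walk_def by simp
    next
      case False
      then have "Suc i = k" using that by simp
      have "w i \<noteq> w (Suc i) \<and> \<kappa> {w i, w (Suc i)} = c"
        using less.prems(1) that unfolding walk_def by blast
      moreover have "w (Suc i) = w ((i+1) mod k)" using \<open>Suc i = k\<close> less.prems(2) by simp
      ultimately show ?thesis by simp
    qed
    moreover have "w ` {..<k} \<subseteq> S" using less.prems(1) unfolding walk_def by auto
    ultimately show ?thesis using True less.prems(3) by blast
  next
    case False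
    then obtain a b where ab: "a < k" "b < k" "a \<noteq> b" "w a = w b"
      unfolding inj_on_def by auto
    obtain i j where ij: "i < j" "j < k" "w i = w j"
      using ab by (metis linorder_neqE_nat)
    have w1: "walk S \<kappa> c (\<lambda>t. w (i + t)) (j - i)"
      using walk_shift[OF less.prems(1), of i "j - i"] ij by simp
    have w2a: "walk S \<kappa> c (\<lambda>t. w (j + t)) (k - j)"
      using walk_shift[OF less.prems(1), of j "k - j"] ij by simp
    have w2b: "walk S \<kappa> c w i"
      using walk_shift[OF less.prems(1), of 0 i] ij by simp
    define w2 where "w2 = (\<lambda>t. if t \<le> k - j then w (j + t) else w (t - (k - j)))"
    have w2: "walk S \<kappa> c w2 (k - j + i)"
      unfolding w2_def using walk_app[OF w2a w2b] ij less.prems(2) by simp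
    have w2c: "w2 (k - j + i) = w2 0"
      unfolding w2_def using ij less.prems(2) by (cases "i = 0") auto
    have "odd (j - i) \<or> odd (k - j + i)" using ij less.prems(3) by presburger
    then show ?thesis
    proof
      assume "odd (j - i)"
      then show ?thesis using less.IH[of "j - i" "\<lambda>t. w (i + t)"] w1 ij by simp
    next
      assume "odd (k - j + i)"
      then show ?thesis using less.IH[of "k - j + i" w2] w2 w2c ij by simp
    qed
  qed
qed

lemma Kn_cycle:
  fixes S :: "nat set"
  assumes "finite S" "2^r < card S" "\<forall>x\<in>S. \<forall>y\<in>S. x \<noteq> y \<longrightarrow> \<kappa> {x, y} < r"
  shows "\<exists>c x k. odd k \<and> 3 \<le> k \<and> k \<le> card S \<and> inj_on x {..<k} \<and> x ` {..<k} \<subseteq> S \<and>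
     (\<forall>i<k. x i \<noteq> x ((i+1) mod k) \<and> \<kappa> {x i, x ((i+1) mod k)} = c)"
proof -
  obtain c w k where "walk S \<kappa> c w k" "w k = w 0" "odd k"
    using exists_odd_walk[OF assms] by blast
  then obtain x :: "nat \<Rightarrow> nat" and k' :: nat where x: "odd k'" "inj_on x {..<k'}" "x ` {..<k'} \<subseteq> S"
     "\<forall>i<k'. x i \<noteq> x ((i+1) mod k') \<and> \<kappa> {x i, x ((i+1) mod k')} = c"
    using odd_walk_cycle by metis
  have "k' \<noteq> 1"
  proof
    assume "k' = 1"
    then have "x 0 \<noteq> x ((0+1) mod k')" using x(4) by auto
    moreover have "(0+1) mod k' = (0::nat)" using \<open>k' = 1\<close> by simp
    ultimately show False by metis
  qed
  then have "3 \<le> k'" using x(1) by presburger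
  moreover have "k' \<le> card S"
    using card_inj_on_le[OF x(2) x(3) assms(1)] by simp
  ultimately show ?thesis using x by blast
qed

definition bt :: "nat \<Rightarrow> nat" where "bt i = (i + 1) div 2"

lemma bt_cases: "a = 2 * bt a \<or> a + 1 = 2 * bt a"
  unfolding bt_def by presburger

lemma bt_odd: "1 \<le> k \<Longrightarrow> bt (2 * k - 1) = k"
  unfolding bt_def by simp

lemma bt_even: "bt (2 * k) = k"
  unfolding bt_def by simp

lemma matched_bt: "matched_pair r i j \<Longrightarrow> bt i = bt j"
proof -
  assume "matched_pair r i j"
  then obtain k where k: "1 \<le> k" "{i, j} = {2*k-1, 2*k}" unfolding matched_pair_def by blast
  then have "(i = 2*k-1 \<and> j = 2*k) \<or> (i = 2*k \<and> j = 2*k-1)" by (simp add: doubleton_eq_iff)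
  then show ?thesis using bt_odd[OF k(1)] bt_even[of k] by auto
qed

lemma bt3: "a \<noteq> b \<Longrightarrow> b \<noteq> c \<Longrightarrow> a \<noteq> c \<Longrightarrow> bt a = bt b \<Longrightarrow> bt b = bt c \<Longrightarrow> False"
  using bt_cases[of a] bt_cases[of b] bt_cases[of c] by linarith

lemma bt_le: "bt i \<le> i"
  unfolding bt_def by simp

lemma enum_set:
  assumes "finite (H::nat set)"
  shows "\<exists>g. (\<forall>j<card H. g j \<in> H) \<and> (\<forall>i j. i < j \<longrightarrow> j < card H \<longrightarrow> g i < g j)"
proof -
  let ?xs = "sorted_list_of_set H"
  have "length ?xs = card H" by simp
  moreover have "set ?xs = H" using assms by simp
  moreover have "sorted_wrt (<) ?xs" by (rule strict_sorted_list_of_set)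
  ultimately show ?thesis
    by (metis nth_mem sorted_wrt_nth_less)
qed

lemma rotate_cycle:
  fixes k d :: nat
  assumes "0 < k" "inj_on x {..<k}" "x ` {..<k} \<subseteq> S" "\<forall>i<k. P (x i) (x ((i+1) mod k))"
  shows "inj_on (\<lambda>i. x ((i + d) mod k)) {..<k} \<and> (\<lambda>i. x ((i + d) mod k)) ` {..<k} \<subseteq> S \<and>
         (\<forall>i<k. P (x ((i + d) mod k)) (x (((i+1) mod k + d) mod k)))"
proof (intro conjI)
  show "inj_on (\<lambda>i. x ((i + d) mod k)) {..<k}"
  proof (rule inj_onI)
    fix i j assume ij: "i \<in> {..<k}" "j \<in> {..<k}" "x ((i + d) mod k) = x ((j + d) mod k)"
    have a: "(i + d) mod k \<in> {..<k}" "(j + d) mod k \<in> {..<k}" using assms(1) by simp_all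
    have "(i + d) mod k = (j + d) mod k"
      by (rule inj_onD[OF assms(2) ij(3) a])
    have X: "((a + d) + (k * d - d)) mod k = a" if "a < k" for a
    proof -
      have "d \<le> k * d" using assms(1) by simp
      then have "(a + d) + (k * d - d) = a + k * d" by simp
      then show ?thesis using that by simp
    qed
    have "i = ((i + d) + (k * d - d)) mod k" using X ij(1) by simp
    also have "\<dots> = (((i + d) mod k) + (k * d - d)) mod k" by (simp add: mod_add_left_eq)
    also have "\<dots> = (((j + d) mod k) + (k * d - d)) mod k" using \<open>(i + d) mod k = (j + d) mod k\<close> by simp
    also have "\<dots> = ((j + d) + (k * d - d)) mod k" by (simp add: mod_add_left_eq)
    also have "\<dots> = j" using X ij(2) by simp
    finally show "i = j" .
  qed
  show "(\<lambda>i. x ((i + d) mod k)) ` {..<k} \<subseteq> S" using assms(1,3) by auto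
  show "\<forall>i<k. P (x ((i + d) mod k)) (x (((i+1) mod k + d) mod k))"
  proof (intro allI impI)
    fix i assume "i < k"
    have eq: "((i+1) mod k + d) mod k = ((i + d) mod k + 1) mod k"
    proof -
      have "((i+1) mod k + d) mod k = (i + 1 + d) mod k" by (rule mod_add_left_eq)
      also have "\<dots> = ((i + d) + 1) mod k" by (simp only: ac_simps)
      also have "\<dots> = ((i + d) mod k + 1) mod k" by (rule mod_add_left_eq[symmetric])
      finally show ?thesis .
    qed
    have lt: "(i + d) mod k < k" using assms(1) by simp
    have "P (x ((i + d) mod k)) (x (((i + d) mod k + 1) mod k))"
      by (rule assms(4)[rule_format, OF lt])
    then show "P (x ((i + d) mod k)) (x (((i+1) mod k + d) mod k))"
      by (simp only: eq)
  qed
qed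

theorem lemma3p6:
  fixes r l :: nat
  assumes "r \<ge> 1" and "l \<ge> 2^r + 1" and "odd l"
  shows "\<exists>m0. \<forall>m\<ge>m0. cycle_ramsey (H_verts m r) (H_adj m r) l r"
proof -
  define n where "n = 2^r + (1::nat)"
  define Pt where "Pt = {1..n}"
  define T where "T = l"
  define M where "M = (n + 1) * T"
  define Pats where "Pats = PiE (Pt \<times> Pt) (\<lambda>_. {..<r})"
  have finP: "finite Pats" unfolding Pats_def Pt_def by (simp add: finite_PiE)
  define K where "K = card Pats"
  obtain h where h: "bij_betw h {0..<K} Pats"
    using ex_bij_betw_nat_finite[OF finP] unfolding K_def by blast
  have hK: "h ` {0..<K} = Pats" using h by (simp add: bij_betw_def)
  obtain N :: nat where N: "partn_lst {..<N} (replicate K M) 2" using ramsey_full[of "replicate K M" 2] by blast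
  have "(2::nat)^1 \<le> 2^r" by (rule power_increasing[OF assms(1)]) simp
  then have T3: "3 \<le> T" unfolding T_def using assms(2) by simp
  have T0g: "0 < T" using T3 by simp
  have nl: "n \<le> l" unfolding n_def using assms(2) by simp
  show ?thesis
  proof (intro exI allI impI)
    fix m assume Nm: "N \<le> m"
    show "cycle_ramsey (H_verts m r) (H_adj m r) l r"
      unfolding cycle_ramsey_def
    proof (intro allI impI)
      fix c :: "(nat \<times> nat) set \<Rightarrow> nat"
      assume cr: "\<forall>u v. H_adj m r u v \<longrightarrow> c {u, v} < r"
      have adj_nm: "H_adj m r (p, a) (q, b)"
        if "p \<in> Pt" "q \<in> Pt" "bt p \<noteq> bt q" "a < m" "b < m" for p q a b
        using that matched_bt[of r p q] unfolding H_adj_def H_verts_def Pt_def n_def by auto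
      have adj_same: "H_adj m r (p, a) (q, a)"
        if "p \<in> Pt" "q \<in> Pt" "p \<noteq> q" "a < m" for p q a
        using that unfolding H_adj_def H_verts_def Pt_def n_def by auto
      define pat where "pat X = restrict (\<lambda>z. if fst z \<noteq> snd z \<and> bt (fst z) \<noteq> bt (snd z)
          then c {(fst z, Min X), (snd z, Max X)} else 0) (Pt \<times> Pt)" for X
      define F where "F X = inv_into {0..<K} h (pat X)" for X
      have patin: "pat X \<in> Pats" if X: "X \<in> nsets {..<N} 2" for X
      proof -
        have "finite X" "card X = 2" "X \<subseteq> {..<N}" using X by (auto simp: nsets_def)
        then have "X \<noteq> {}" by auto
        then have "Min X \<in> X" "Max X \<in> X" using \<open>finite X\<close> by auto
        then have mm: "Min X < m" "Max X < m" using \<open>X \<subseteq> {..<N}\<close> Nm by auto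
        have "c {(p, Min X), (q, Max X)} < r" if "p \<in> Pt" "q \<in> Pt" "bt p \<noteq> bt q" for p q
          using cr adj_nm[OF that mm] by blast
        then show ?thesis unfolding Pats_def pat_def using assms(1)
          by (auto simp: restrict_PiE_iff)
      qed
      have FK: "F \<in> nsets {..<N} 2 \<rightarrow> {..<K}"
      proof
        fix X assume X: "X \<in> nsets {..<N} 2"
        have "pat X \<in> h ` {0..<K}" unfolding hK by (rule patin[OF X])
        then have "inv_into {0..<K} h (pat X) \<in> {0..<K}" by (rule inv_into_into)
        then show "F X \<in> {..<K}" unfolding F_def by simp
      qed
      obtain i H where iH: "i < length (replicate K M)" "H \<in> nsets {..<N} (replicate K M ! i)"
          "F ` nsets H 2 \<subseteq> {i}"
        using partn_lstE[OF N FK length_replicate] by blast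
      have H: "H \<subseteq> {..<N}" "finite H" "card H = M" using iH by (auto simp: nsets_def)
      have hom: "c {(p, a), (q, b)} = c {(p, a'), (q, b')}"
        if ab: "a \<in> H" "b \<in> H" "a' \<in> H" "b' \<in> H" "a < b" "a' < b'" and pq: "p \<in> Pt" "q \<in> Pt" "bt p \<noteq> bt q"
        for p q a b a' b'
      proof -
        have X1: "{a, b} \<in> nsets H 2" "{a', b'} \<in> nsets H 2" using ab by (auto simp: nsets_def)
        then have X2: "{a, b} \<in> nsets {..<N} 2" "{a', b'} \<in> nsets {..<N} 2"
          using X1 nsets_mono[OF H(1)] by blast+
        have "F {a, b} = i" "F {a', b'} = i" using imageI[OF X1(1), of F] imageI[OF X1(2), of F] iH(3) by blast+
        moreover have "h (F X) = pat X" if "X \<in> nsets {..<N} 2" for X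
          unfolding F_def using patin[OF that] hK by (simp add: f_inv_into_f)
        ultimately have "pat {a, b} = pat {a', b'}" using X2 by metis
        then have "pat {a, b} (p, q) = pat {a', b'} (p, q)" by simp
        moreover have "p \<noteq> q" using pq by auto
        ultimately show ?thesis using pq ab unfolding pat_def by simp
      qed
      obtain g where g: "\<forall>j<M. g j \<in> H" "\<forall>i j. i < j \<longrightarrow> j < M \<longrightarrow> g i < g j"
        using enum_set[OF H(2)] H(3) by metis
      define cl where "cl p s = g (bt p * T + s)" for p s
      have idx: "bt p * T + s < M" if "p \<in> Pt" "s < T" for p s
      proof -
        have "bt p \<le> n" using bt_le[of p] that(1) unfolding Pt_def by simp
        then have "bt p * T \<le> n * T" by (rule mult_le_mono1)
        moreover have "(n + 1) * T = n * T + T" by simp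
        ultimately show ?thesis unfolding M_def using that(2) by linarith
      qed
      have clH: "cl p s \<in> H" if "p \<in> Pt" "s < T" for p s
        unfolding cl_def using g(1) idx[OF that] by simp
      have clm: "cl p s < m" if "p \<in> Pt" "s < T" for p s
        using clH[OF that] H(1) Nm by auto
      have cl_lt: "cl p s < cl q s'" if "p \<in> Pt" "q \<in> Pt" "bt p < bt q" "s < T" "s' < T" for p q s s'
      proof -
        have "bt p * T + s < (bt p + 1) * T" using that by simp
        also have "\<dots> \<le> bt q * T" using that(3) by (intro mult_le_mono1) simp
        finally have "bt p * T + s < bt q * T + s'" by simp
        then show ?thesis unfolding cl_def using g(2) idx[OF that(2,5)] by blast
      qed
      have cl_inj: "s = s'" if "p \<in> Pt" "s < T" "s' < T" "cl p s = cl p s'" for p s s'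
      proof (rule ccontr)
        assume "s \<noteq> s'"
        then consider "s < s'" | "s' < s" by linarith
        then show False
        proof cases
          case 1
          then have "cl p s < cl p s'" unfolding cl_def using g(2) idx[OF that(1,3)] by simp
          then show False using that(4) by simp
        next
          case 2
          then have "cl p s' < cl p s" unfolding cl_def using g(2) idx[OF that(1,2)] by simp
          then show False using that(4) by simp
        qed
      qed
      define \<kappa> where "\<kappa> X = c {(Min X, cl (Min X) 0), (Max X, cl (Max X) 0)}" for X
      have \<kappa>sym: "\<kappa> {p, q} = c {(p, cl p 0), (q, cl q 0)}" for p q
      proof (cases "p \<le> q")
        case True
        then show ?thesis unfolding \<kappa>_def by (simp add: min_def max_def)
      next
        case False
        then show ?thesis unfolding \<kappa>_def by (simp add: min_def max_def insert_commute)
      qed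
      have edge: "H_adj m r (p, cl p s) (q, cl q s') \<and> c {(p, cl p s), (q, cl q s')} = \<kappa> {p, q}"
        if pq: "p \<in> Pt" "q \<in> Pt" "p \<noteq> q" "s < T" "s' < T" "bt p \<noteq> bt q \<or> (s = 0 \<and> s' = 0)"
        for p q s s'
      proof (cases "bt p = bt q")
        case True
        then have s0: "s = 0" "s' = 0" using pq(6) by auto
        have "cl p 0 = cl q 0" unfolding cl_def using True by simp
        then show ?thesis using adj_same[OF pq(1-3) clm[OF pq(1), of 0]] T3 s0 \<kappa>sym[of p q] by simp
      next
        case False
        have adj: "H_adj m r (p, cl p s) (q, cl q s')" using adj_nm[OF pq(1,2) False clm[OF pq(1,4)] clm[OF pq(2,5)]] .
        have T0: "0 < T" using T3 by simp
        show ?thesis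
        proof (cases "bt p < bt q")
          case True
          have "c {(p, cl p s), (q, cl q s')} = c {(p, cl p 0), (q, cl q 0)}"
            by (rule hom[OF clH[OF pq(1,4)] clH[OF pq(2,5)] clH[OF pq(1) T0] clH[OF pq(2) T0]
                  cl_lt[OF pq(1,2) True pq(4,5)] cl_lt[OF pq(1,2) True T0 T0] pq(1,2) False])
          then show ?thesis using adj \<kappa>sym[of p q] by simp
        next
          case False2: False
          then have lt: "bt q < bt p" using False by simp
          have "c {(q, cl q s'), (p, cl p s)} = c {(q, cl q 0), (p, cl p 0)}"
            by (rule hom[OF clH[OF pq(2,5)] clH[OF pq(1,4)] clH[OF pq(2) T0] clH[OF pq(1) T0]
                  cl_lt[OF pq(2,1) lt pq(5,4)] cl_lt[OF pq(2,1) lt T0 T0] pq(2,1)]) (use False in auto)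
          then show ?thesis using adj \<kappa>sym[of p q] by (simp add: insert_commute)
        qed
      qed
      have \<kappa>r: "\<forall>x\<in>Pt. \<forall>y\<in>Pt. x \<noteq> y \<longrightarrow> \<kappa> {x, y} < r"
      proof (intro ballI impI)
        fix x y assume "x \<in> Pt" "y \<in> Pt" "x \<noteq> y"
        then show "\<kappa> {x, y} < r" using edge[of x y 0 0] T3 cr by fastforce
      qed
      have cardPt: "2^r < card Pt" unfolding Pt_def n_def by simp
      have finPt: "finite Pt" unfolding Pt_def by simp
      obtain col x k where cyc: "odd k" "3 \<le> k" "k \<le> card Pt" "inj_on x {..<k}" "x ` {..<k} \<subseteq> Pt"
          "\<forall>i<k. x i \<noteq> x ((i+1) mod k) \<and> \<kappa> {x i, x ((i+1) mod k)} = col"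
        using Kn_cycle[OF finPt cardPt \<kappa>r] by blast
      have m3: "(0::nat) \<in> {..<k}" "(1::nat) \<in> {..<k}" "(2::nat) \<in> {..<k}" using cyc(2) by auto
      have xne: "x a \<noteq> x b" if "a \<in> {..<k}" "b \<in> {..<k}" "a \<noteq> b" for a b
        using inj_onD[OF cyc(4) _ that(1,2)] that(3) by blast
      have x012: "x 0 \<noteq> x 1" "x 1 \<noteq> x 2" "x 0 \<noteq> x 2"
        using xne[OF m3(1,2)] xne[OF m3(2,3)] xne[OF m3(1,3)] by auto
      obtain d :: nat where d: "d = 1 \<or> d = 2" "bt (x (d - 1)) \<noteq> bt (x d)"
      proof (cases "bt (x 0) = bt (x 1)")
        case True
        then have "bt (x 1) \<noteq> bt (x 2)" using bt3[OF x012(1,2,3)] by blast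
        then show ?thesis using that[of 2] by simp
      next
        case False
        then show ?thesis using that[of 1] by simp
      qed
      define y where "y i = x ((i + d) mod k)" for i
      have k0: "0 < k" using cyc(2) by simp
      have rot: "inj_on y {..<k} \<and> y ` {..<k} \<subseteq> Pt \<and>
          (\<forall>i<k. (\<lambda>a b. a \<noteq> b \<and> \<kappa> {a, b} = col) (x ((i + d) mod k)) (x (((i+1) mod k + d) mod k)))"
        unfolding y_def
        by (rule rotate_cycle[OF k0 cyc(4) cyc(5)]) (use cyc(6) in simp)
      then have yinj: "inj_on y {..<k}" and yPt: "y ` {..<k} \<subseteq> Pt"
        and ycyc: "\<forall>i<k. y i \<noteq> y ((i+1) mod k) \<and> \<kappa> {y i, y ((i+1) mod k)} = col"
        unfolding y_def by auto
      have y0: "y 0 = x d" unfolding y_def using d(1) cyc(2) by auto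
      have yk: "y (k - 1) = x (d - 1)"
      proof -
        have "k - 1 + d = (d - 1) + k" using d(1) cyc(2) by auto
        then have "(k - 1 + d) mod k = (d - 1 + k) mod k" by simp
        also have "\<dots> = (d - 1) mod k" by (rule mod_add_self2)
        also have "\<dots> = d - 1" using d(1) cyc(2) by auto
        finally have "(k - 1 + d) mod k = d - 1" .
        then show ?thesis unfolding y_def by simp
      qed
      define p0 where "p0 = y 0"
      define p1 where "p1 = y (k - 1)"
      have bt01: "bt p0 \<noteq> bt p1" unfolding p0_def p1_def y0 yk using d(2) by simp
      then have p01: "p0 \<noteq> p1" by auto
      have p0Pt: "p0 \<in> Pt" unfolding p0_def using yPt k0 by auto
      have p1Pt: "p1 \<in> Pt" unfolding p1_def using yPt k0 by auto
      have colp: "\<kappa> {p1, p0} = col"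
      proof -
        have "(k - 1 + 1) mod k = 0" using k0 by simp
        then show ?thesis using ycyc k0 unfolding p0_def p1_def
          by (metis diff_less zero_less_one)
      qed
      define P where "P t = (if t < k then y t else if even (t - k) then p0 else p1)" for t
      define S where "S t = (if t < k then 0 else (t - k) div 2 + 1)" for t
      define f where "f t = (P t, cl (P t) (S t))" for t
      have lk: "k \<le> l" using cyc(3) nl unfolding Pt_def by simp
      have evlk: "even (l - k)" using assms(3) cyc(1) lk by simp
      have PPt: "P t \<in> Pt" for t unfolding P_def using yPt p0Pt p1Pt by auto
      have ST: "S t < T" if "t < l" for t
      proof (cases "t < k")
        case True
        then show ?thesis unfolding S_def using T3 by simp
      next
        case False
        have "(t - k) div 2 \<le> t - k" by simp
        moreover have "S t = (t - k) div 2 + 1" unfolding S_def using False by simp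
        ultimately show ?thesis unfolding T_def using False that cyc(2) by linarith
      qed
      have medge: "H_adj m r (f t) (f t') \<and> c {f t, f t'} = col"
        if "P t \<noteq> P t'" "S t < T" "S t' < T" "bt (P t) \<noteq> bt (P t') \<or> (S t = 0 \<and> S t' = 0)"
           "\<kappa> {P t, P t'} = col" for t t'
        using edge[OF PPt PPt that(1-4)] that(5) unfolding f_def by simp
      show "has_mono_cycle (H_verts m r) (H_adj m r) c l"
        unfolding has_mono_cycle_def
      proof (intro exI conjI)
        show "inj_on f {0..<l}"
        proof (rule inj_onI)
          fix t1 t2 assume t: "t1 \<in> {0..<l}" "t2 \<in> {0..<l}" "f t1 = f t2"
          then have PP: "P t1 = P t2" and "cl (P t1) (S t1) = cl (P t1) (S t2)" unfolding f_def by auto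
          then have SS: "S t1 = S t2" using cl_inj[OF PPt ST ST] t by auto
          show "t1 = t2"
          proof (cases "t1 < k")
            case True
            show ?thesis
            proof (cases "t2 < k")
              case True2: True
              then show ?thesis using True PP inj_onD[OF yinj] unfolding P_def by auto
            next
              case False
              then show ?thesis using True SS unfolding S_def by auto
            qed
          next
            case False
            show ?thesis
            proof (cases "t2 < k")
              case True2: True
              then show ?thesis using False SS unfolding S_def by auto
            next
              case False2: False
              have dd: "(t1 - k) div 2 = (t2 - k) div 2" using SS False False2 unfolding S_def by auto
              have "even (t1 - k) = even (t2 - k)"
                using PP False False2 p01 unfolding P_def by (auto split: if_splits)
              then have "t1 - k = t2 - k" using dd by presburger
              then show ?thesis using False False2 by simp
            qed
          qed
        qed
        show "f ` {0..<l} \<subseteq> H_verts m r"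
        proof
          fix z assume "z \<in> f ` {0..<l}"
          then obtain t where t: "t < l" "z = f t" by auto
          have "cl (P t) (S t) < m" using clm[OF PPt ST[OF t(1)]] .
          then show "z \<in> H_verts m r" using PPt[of t] unfolding t(2) f_def H_verts_def Pt_def n_def by auto
        qed
        show "\<forall>t<l. H_adj m r (f t) (f ((t + 1) mod l)) \<and> c {f t, f ((t + 1) mod l)} = col"
        proof (intro allI impI)
          fix t assume tl: "t < l"
          consider (a) "t + 1 < k" | (b) "t + 1 = k" "k = l" | (c) "t + 1 = k" "k < l"
            | (d) "k \<le> t" "t + 1 < l" | (e) "k \<le> t" "t + 1 = l"
            using tl lk by linarith
          then show "H_adj m r (f t) (f ((t + 1) mod l)) \<and> c {f t, f ((t + 1) mod l)} = col"
          proof cases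
            case a
            then have e1: "(t + 1) mod l = t + 1" "(t + 1) mod k = t + 1" using lk by auto
            have tk: "t < k" using a by simp
            have "y t \<noteq> y (t + 1) \<and> \<kappa> {y t, y (t + 1)} = col"
              using ycyc[rule_format, OF tk] unfolding e1(2) .
            then show ?thesis unfolding e1(1) using a
              by (intro medge) (auto simp: P_def S_def T0g)
          next
            case b
            then have e1: "(t + 1) mod l = 0" "(t + 1) mod k = 0" by auto
            have tk: "t < k" using b by simp
            have "y t \<noteq> y 0 \<and> \<kappa> {y t, y 0} = col"
              using ycyc[rule_format, OF tk] unfolding e1(2) .
            then show ?thesis unfolding e1(1) using b k0
              by (intro medge) (auto simp: P_def S_def T0g)
          next
            case c
            then have e1: "(t + 1) mod l = k" by auto
            have "P t = p1" "P k = p0" "S t = 0" "S k = 1" using c unfolding P_def S_def p1_def by auto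
            then show ?thesis unfolding e1 using bt01 p01 colp T0g T3
              by (intro medge) (auto simp: insert_commute)
          next
            case d
            then have e1: "(t + 1) mod l = t + 1" by auto
            have "{P t, P (t + 1)} = {p1, p0}" "P t \<noteq> P (t + 1)"
              using d p01 unfolding P_def by (auto simp: Suc_diff_le)
            moreover have "bt (P t) \<noteq> bt (P (t + 1))"
              using d bt01 unfolding P_def by (auto simp: Suc_diff_le)
            ultimately show ?thesis unfolding e1 using colp ST[OF tl] ST[of "t + 1"] d
              by (intro medge) auto
          next
            case e
            then have e1: "(t + 1) mod l = 0" by auto
            have "odd (t - k)" using e evlk by presburger
            then have "P t = p1" "P 0 = p0" "S 0 = 0" using e k0 unfolding P_def S_def p0_def by auto
            then show ?thesis unfolding e1 using bt01 p01 colp T0g ST[OF tl]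
              by (intro medge) (auto simp: insert_commute)
          qed
        qed
      qed
  qed
qed
qed

end
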